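(* A family $\mathcal F$ of safety constraints is a family with a universal detector if and only if there exists $C\subseteq\Omega$ such that (1) for every $P\in C$ and every $n\in N$, either $n\in P$ or $n^{-1}\cdot P\in C$; and (2) for every safety constraint $S$, $S\in\mathcal F$ if and only if $S=C_\omega(P)$ for some $P\in C$.
   Context: Fix a finite nonempty set $N$; $N^+$ the nonempty finite words, $N^{\mathbb N}$ the streams; $s[0{:}m]$ prefix of length $m$, $s[m{:}]$ suffix; $n^{-1}\cdot A=\{u:nu\in A\}$; a set of words is prefix-free if no proper prefix (including the empty word) of a member is a member. A safety constraint is a set $S\subseteq N^{\mathbb N}$ such that any $s$ with "for every $m$ there is $s'\in S$ with $s'[0{:}m]=s[0{:}m]$" belongs to $S$. Let $\mathbf 1=\{\Downarrow\}$. A detector is a set $|a|$ with $a:|a|\to(\mathbf 1+|a|)^N$. The final detector $\omega$ has carrier $\Omega$ = the set of prefix-free subsets of $N^+$, with $\omega(P)(n)=\Downarrow$ if $n\in P$, else $n^{-1}\cdot P$. For $s\in N^{\mathbb N}$, $\mathrm{Join}([s],a)$ maps $(t,y)\in\{s[k{:}]\}\times|a|$ to $\Downarrow$ if $a(y)(t(0))=\Downarrow$, else $(t[1{:}],a(y)(t(0)))$; iterates $g^{(1)}=g$, $g^{(k+1)}(z)=\Downarrow$ if $g^{(k)}(z)=\Downarrow$, else $g(g^{(k)}(z))$. $C_a(x)=\{s:\mathrm{Join}([s],a)^{(k)}(s,x)\ne\Downarrow\ \forall k\ge1\}$. A family $\mathcal F$ of safety constraints is a family with a universal detector if $\mathcal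 F=\{C_a(x):x\in|a|\}$ for some detector $a$. *)

theory Defs
  imports Main
begin

text \<open>The alphabet N is a finite (hence nonempty) type 'n. Streams are functions nat \<Rightarrow> 'n;
nonempty finite words are nonempty lists. The output \<Down> is None, a next state y is Some y.\<close>

type_synonym 'n stream = "nat \<Rightarrow> 'n"

definition safety :: "('n stream) set \<Rightarrow> bool" where
  "safety S \<longleftrightarrow> (\<forall>s. (\<forall>m. \<exists>s'\<in>S. \<forall>i<m. s' i = s i) \<longrightarrow> s \<in> S)"

definition lquot :: "'n \<Rightarrow> 'n list set \<Rightarrow> 'n list set" where
  "lquot n A = {u. n # u \<in> A}"

definition prefix_free :: "'n list set \<Rightarrow> bool" where
  "prefix_free P \<longleftrightarrow> (\<forall>u w. u \<in> P \<and> u @ w \<in> P \<longrightarrow> w = [])"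

definition Omega :: "'n list set set" where
  "Omega = {P. (\<forall>w\<in>P. w \<noteq> []) \<and> prefix_free P}"

definition omega :: "'n list set \<Rightarrow> 'n \<Rightarrow> 'n list set option" where
  "omega P n = (if [n] \<in> P then None else Some (lquot n P))"

definition detector :: "'x set \<Rightarrow> ('x \<Rightarrow> 'n \<Rightarrow> 'x option) \<Rightarrow> bool" where
  "detector A a \<longleftrightarrow> (\<forall>y\<in>A. \<forall>n. \<forall>y'. a y n = Some y' \<longrightarrow> y' \<in> A)"

definition Join :: "'n stream \<Rightarrow> ('x \<Rightarrow> 'n \<Rightarrow> 'x option)
    \<Rightarrow> ('n stream \<times> 'x) \<Rightarrow> ('n stream \<times> 'x) option" where
  "Join s a z = (case z of (t, y) \<Rightarrow>
      (case a y (t 0) of None \<Rightarrow> None | Some y' \<Rightarrow> Some (\<lambda>k. t (Suc k), y')))"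

fun iter :: "('z \<Rightarrow> 'z option) \<Rightarrow> nat \<Rightarrow> 'z \<Rightarrow> 'z option" where
  "iter g 0 z = Some z"
| "iter g (Suc 0) z = g z"
| "iter g (Suc (Suc k)) z = (case iter g (Suc k) z of None \<Rightarrow> None | Some z' \<Rightarrow> g z')"

definition Cdet :: "('x \<Rightarrow> 'n \<Rightarrow> 'x option) \<Rightarrow> 'x \<Rightarrow> ('n stream) set" where
  "Cdet a x = {s. \<forall>k\<ge>1. iter (Join s a) k (s, x) \<noteq> None}"

end

theory Submission
  imports Defs
begin

fun run :: "('x \<Rightarrow> 'n \<Rightarrow> 'x option) \<Rightarrow> 'x \<Rightarrow> 'n list \<Rightarrow> 'x option" where
  "run a y [] = Some y"
| "run a y (n # w) = (case a y n of None \<Rightarrow> None | Some y' \<Rightarrow> run a y' w)"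

lemma run_snoc: "run a y (w @ [n]) = (case run a y w of None \<Rightarrow> None | Some z \<Rightarrow> a z n)"
  by (induction w arbitrary: y) (auto split: option.splits)

lemma iter_Suc: "iter g (Suc k) z = (case iter g k z of None \<Rightarrow> None | Some z' \<Rightarrow> g z')"
  by (cases k) auto

lemma iter_Join: "iter (Join s a) k (s, x) = map_option (\<lambda>y. (\<lambda>i. s (i + k), y)) (run a x (map s [0..<k]))"
proof (induction k)
  case 0 then show ?case by simp
next
  case (Suc k)
  show ?case
    unfolding iter_Suc Suc by (auto simp: run_snoc Join_def split: option.splits)
qed

lemma Cdet_run: "Cdet a x = {s. \<forall>k. run a x (map s [0..<k]) \<noteq> None}"
proof -
  have "(\<forall>k\<ge>1. iter (Join s a) k (s, x) \<noteq> None) \<longleftrightarrow> (\<forall>k. run a x (map s [0..<k]) \<noteq> None)" for s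
  proof -
    have "(\<forall>k\<ge>1. run a x (map s [0..<k]) \<noteq> None) \<longleftrightarrow> (\<forall>k. run a x (map s [0..<k]) \<noteq> None)"
    proof (intro iffI allI)
      fix k assume h: "\<forall>k\<ge>1. run a x (map s [0..<k]) \<noteq> None"
      show "run a x (map s [0..<k]) \<noteq> None"
      proof (cases k)
        case 0 then show ?thesis by simp
      next
        case (Suc m) then have "k \<ge> 1" by simp
        then show ?thesis using h by blast
      qed
    qed simp
    then show ?thesis by (simp add: iter_Join)
  qed
  then show ?thesis unfolding Cdet_def by blast
qed

lemma Cdet_safety: "safety (Cdet a x)"
  unfolding safety_def Cdet_run
proof (intro allI impI, simp only: mem_Collect_eq, intro allI)
  fix s k
  assume h: "\<forall>m. \<exists>s'\<in>{s. \<forall>k. run a x (map s [0..<k]) \<noteq> None}. \<forall>i<m. s' i = s i"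
  from h obtain s' where "\<forall>k. run a x (map s' [0..<k]) \<noteq> None" "\<forall>i<k. s' i = s i" by blast
  moreover have "map s' [0..<k] = map s [0..<k]" using calculation(2) by simp
  ultimately show "run a x (map s [0..<k]) \<noteq> None" by metis
qed

lemma Cdet_eq:
  assumes "\<And>w. run a x w = None \<longleftrightarrow> run b y w = None"
  shows "Cdet a x = Cdet b y"
  using assms unfolding Cdet_run by auto

definition beh :: "('x \<Rightarrow> 'n \<Rightarrow> 'x option) \<Rightarrow> 'x \<Rightarrow> 'n list set" where
  "beh a y = {v @ [n] | v n z. run a y v = Some z \<and> a z n = None}"

lemma beh_single: "[n] \<in> beh a y \<longleftrightarrow> a y n = None"
  unfolding beh_def by auto

lemma beh_lquot: "a y n = Some y' \<Longrightarrow> lquot n (beh a y) = beh a y'"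
  unfolding beh_def lquot_def
  apply (auto)
   apply (case_tac v; force)
  done

lemma run_none_prefix: "run a y u = None \<Longrightarrow> run a y (u @ w) = None"
  by (induction u arbitrary: y) (auto split: option.splits)

lemma beh_Omega: "beh a y \<in> Omega"
  unfolding Omega_def prefix_free_def
proof (safe)
  fix w assume "[] \<in> beh a y" then show False unfolding beh_def by auto
next
  fix u w
  assume u: "u \<in> beh a y" and uw: "u @ w \<in> beh a y"
  show "w = []"
  proof (rule ccontr)
    assume "w \<noteq> []"
    from u obtain v n z where u1: "u = v @ [n]" "run a y v = Some z" "a z n = None"
      unfolding beh_def by auto
    have ru: "run a y u = None" using u1 by (simp add: run_snoc)
    from uw obtain v' n' z' where "u @ w = v' @ [n']" "run a y v' = Some z'"
      unfolding beh_def by auto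
    moreover have "v' = u @ butlast w" using calculation(1) \<open>w \<noteq> []\<close>
      by (metis butlast_append butlast_snoc)
    ultimately show False using run_none_prefix[OF ru] by simp
  qed
qed

lemma run_omega_beh: "run omega (beh a y) w = map_option (beh a) (run a y w)"
proof (induction w arbitrary: y)
  case Nil then show ?case by simp
next
  case (Cons n w)
  show ?case
  proof (cases "a y n")
    case None then show ?thesis by (simp add: omega_def beh_single)
  next
    case (Some y')
    then have "omega (beh a y) n = Some (beh a y')"
      by (simp add: omega_def beh_single beh_lquot)
    then show ?thesis using Some Cons by simp
  qed
qed

lemma Cdet_beh: "Cdet omega (beh a y) = Cdet a y"
  by (rule Cdet_eq) (simp add: run_omega_beh)

definition fdet :: "('n list set \<Rightarrow> 'x) \<Rightarrow> 'x \<Rightarrow> 'n \<Rightarrow> 'x option" where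
  "fdet f y n = (if [n] \<in> inv f y then None else Some (f (lquot n (inv f y))))"

lemma run_fdet: "inj f \<Longrightarrow> run (fdet f) (f P) w = map_option f (run omega P w)"
  by (induction w arbitrary: P) (auto simp: fdet_def omega_def)

lemma Cdet_fdet: "inj f \<Longrightarrow> Cdet (fdet f) (f P) = Cdet omega P"
  by (rule Cdet_eq) (simp add: run_fdet)

theorem mainTheorem16:
  fixes F :: "('n::finite) stream set set"
    and dummy :: "'x itself"
  assumes big: "\<exists>f :: 'n list set \<Rightarrow> 'x. inj f"
    and safe: "\<forall>S\<in>F. safety S"
  shows "(\<exists>(A :: 'x set) a. detector A a \<and> F = {Cdet a x | x. x \<in> A})
     \<longleftrightarrow> (\<exists>C. C \<subseteq> Omega
            \<and> (\<forall>P\<in>C. \<forall>n. [n] \<in> P \<or> lquot n P \<in> C)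
            \<and> (\<forall>S. safety S \<longrightarrow> (S \<in> F \<longleftrightarrow> (\<exists>P\<in>C. S = Cdet omega P))))"
proof
  assume "\<exists>(A :: 'x set) a. detector A a \<and> F = {Cdet a x | x. x \<in> A}"
  then obtain A :: "'x set" and a where det: "detector A a" and FA: "F = {Cdet a x | x. x \<in> A}"
    by blast
  show "\<exists>C. C \<subseteq> Omega
            \<and> (\<forall>P\<in>C. \<forall>n. [n] \<in> P \<or> lquot n P \<in> C)
            \<and> (\<forall>S. safety S \<longrightarrow> (S \<in> F \<longleftrightarrow> (\<exists>P\<in>C. S = Cdet omega P)))"
  proof (intro exI[of _ "beh a ` A"] conjI ballI allI impI)
    show "beh a ` A \<subseteq> Omega" by (rule image_subsetI, rule beh_Omega)
  next
    fix P n assume "P \<in> beh a ` A"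
    then obtain y where y: "y \<in> A" "P = beh a y" by blast
    show "[n] \<in> P \<or> lquot n P \<in> beh a ` A"
    proof (cases "a y n")
      case None then show ?thesis using y by (simp add: beh_single)
    next
      case (Some y')
      then have "y' \<in> A" using det y unfolding detector_def by blast
      moreover have "lquot n P = beh a y'" using y Some by (simp add: beh_lquot)
      ultimately show ?thesis by blast
    qed
  next
    fix S :: "'n stream set"
    show "S \<in> F \<longleftrightarrow> (\<exists>P\<in>beh a ` A. S = Cdet omega P)"
      unfolding FA by (auto simp: Cdet_beh)
  qed
next
  assume "\<exists>C. C \<subseteq> Omega
            \<and> (\<forall>P\<in>C. \<forall>n. [n] \<in> P \<or> lquot n P \<in> C)
            \<and> (\<forall>S. safety S \<longrightarrow> (S \<in> F \<longleftrightarrow> (\<exists>P\<in>C. S = Cdet omega P)))"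
  then obtain C where cl: "\<forall>P\<in>C. \<forall>n. [n] \<in> P \<or> lquot n P \<in> C"
    and sc: "\<forall>S. safety S \<longrightarrow> (S \<in> F \<longleftrightarrow> (\<exists>P\<in>C. S = Cdet omega P))" by blast
  from big obtain f :: "'n list set \<Rightarrow> 'x" where inj: "inj f" by blast
  show "\<exists>(A :: 'x set) a. detector A a \<and> F = {Cdet a x | x. x \<in> A}"
  proof (intro exI conjI)
    show "detector (f ` C) (fdet f)"
      unfolding detector_def fdet_def using cl inj by (auto split: if_splits)
    show "F = {Cdet (fdet f) x | x. x \<in> f ` C}"
    proof safe
      fix S assume "S \<in> F"
      then obtain P where "P \<in> C" "S = Cdet omega P" using sc safe by blast
      then show "\<exists>x. S = Cdet (fdet f) x \<and> x \<in> f ` C" using Cdet_fdet[OF inj] by blast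
    next
      fix P assume "P \<in> C"
      then show "Cdet (fdet f) (f P) \<in> F"
        using sc Cdet_safety[of omega P] Cdet_fdet[OF inj] by auto
    qed
  qed
qed

end
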